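(* Let $G$ be a countable connected graph. Let $X\subseteq|G|$ be a closed subspace, and let $O_1,O_2$ be disjoint open subsets of $X$ with $X=O_1\cup O_2$. Then the set of edges of $G$ with one endvertex in $O_1$ and the other in $O_2$ is finite.
   Context: Graphs may have parallel edges and loops. The space $|G|$: a ray is a one-way infinite path; two rays are edge-equivalent if for every finite set $F$ of edges some component of $G-F$ contains subrays of both; the classes are the edge-ends of $G$. View edges as copies of $[0,1]$ and let $X_G$ be the quotient obtained by identifying them at common vertices. $|G|$ has point set $X_G$ together with all edge-ends; its open sets are the unions of sets $\widetilde C$, where $C$ is a connected component of $X_G\setminus Z$ for some finite set $Z$ of inner points of edges, and $\widetilde C$ is $C$ together with all edge-ends represented by a ray in $C$. *)

theory Defs
  imports "HOL-Analysis.Analysis"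
begin

text \<open>A (multi)graph is given by a vertex set V, an edge set E and a map
  ends assigning to every edge its ordered pair of endvertices (loops: both
  components equal; parallel edges: distinct edges with the same ends).\<close>

definition is_graph :: "'v set \<Rightarrow> 'e set \<Rightarrow> ('e \<Rightarrow> 'v \<times> 'v) \<Rightarrow> bool" where
  "is_graph V E ends \<longleftrightarrow> (\<forall>e\<in>E. fst (ends e) \<in> V \<and> snd (ends e) \<in> V)"

definition adj_minus :: "'v set \<Rightarrow> 'e set \<Rightarrow> ('e \<Rightarrow> 'v \<times> 'v) \<Rightarrow> 'e set \<Rightarrow> ('v \<times> 'v) set" where
  "adj_minus V E ends F = {(x, y). \<exists>e\<in>E - F. ends e = (x, y) \<or> ends e = (y, x)}"

definition components_minus :: "'v set \<Rightarrow> 'e set \<Rightarrow> ('e \<Rightarrow> 'v \<times> 'v) \<Rightarrow> 'e set \<Rightarrow> 'v set set" where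
  "components_minus V E ends F = {{w. (v, w) \<in> (adj_minus V E ends F)\<^sup>*} | v. v \<in> V}"

definition graph_connected :: "'v set \<Rightarrow> 'e set \<Rightarrow> ('e \<Rightarrow> 'v \<times> 'v) \<Rightarrow> bool" where
  "graph_connected V E ends \<longleftrightarrow> (\<forall>u\<in>V. \<forall>v\<in>V. (u, v) \<in> (adj_minus V E ends {})\<^sup>*)"

definition is_ray :: "'v set \<Rightarrow> 'e set \<Rightarrow> ('e \<Rightarrow> 'v \<times> 'v) \<Rightarrow> (nat \<Rightarrow> 'v) \<times> (nat \<Rightarrow> 'e) \<Rightarrow> bool" where
  "is_ray V E ends R \<longleftrightarrow> inj (fst R) \<and>
     (\<forall>i. fst R i \<in> V \<and> snd R i \<in> E \<and>
          (ends (snd R i) = (fst R i, fst R (Suc i)) \<or> ends (snd R i) = (fst R (Suc i), fst R i)))"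

definition edge_equiv :: "'v set \<Rightarrow> 'e set \<Rightarrow> ('e \<Rightarrow> 'v \<times> 'v) \<Rightarrow>
    (nat \<Rightarrow> 'v) \<times> (nat \<Rightarrow> 'e) \<Rightarrow> (nat \<Rightarrow> 'v) \<times> (nat \<Rightarrow> 'e) \<Rightarrow> bool" where
  "edge_equiv V E ends R1 R2 \<longleftrightarrow>
     (\<forall>F. finite F \<longrightarrow> (\<exists>K \<in> components_minus V E ends F. \<exists>n m.
        (\<forall>i\<ge>n. fst R1 i \<in> K \<and> snd R1 i \<notin> F) \<and> (\<forall>i\<ge>m. fst R2 i \<in> K \<and> snd R2 i \<notin> F)))"

definition edge_end :: "'v set \<Rightarrow> 'e set \<Rightarrow> ('e \<Rightarrow> 'v \<times> 'v) \<Rightarrow>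
    (nat \<Rightarrow> 'v) \<times> (nat \<Rightarrow> 'e) \<Rightarrow> ((nat \<Rightarrow> 'v) \<times> (nat \<Rightarrow> 'e)) set" where
  "edge_end V E ends R = {R'. is_ray V E ends R' \<and> edge_equiv V E ends R R'}"

text \<open>Points of |G|: vertices, inner points of edges (Inner e t, 0 < t < 1), edge-ends.\<close>
datatype ('v, 'e) gpoint = Vert 'v | Inner 'e real | End "((nat \<Rightarrow> 'v) \<times> (nat \<Rightarrow> 'e)) set"

definition edge_pt :: "('e \<Rightarrow> 'v \<times> 'v) \<Rightarrow> 'e \<Rightarrow> real \<Rightarrow> ('v, 'e) gpoint" where
  "edge_pt ends e t = (if t = 0 then Vert (fst (ends e)) else if t = 1 then Vert (snd (ends e)) else Inner e t)"

definition inner_pts :: "'e set \<Rightarrow> ('v, 'e) gpoint set" where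
  "inner_pts E = {Inner e t | e t. e \<in> E \<and> 0 < t \<and> t < 1}"

definition XG_pts :: "'v set \<Rightarrow> 'e set \<Rightarrow> ('v, 'e) gpoint set" where
  "XG_pts V E = Vert ` V \<union> inner_pts E"

text \<open>The 1-complex X_G: quotient topology of the disjoint union of the edges (copies of [0,1])
  and the vertices, identified at common vertices.\<close>
definition XG :: "'v set \<Rightarrow> 'e set \<Rightarrow> ('e \<Rightarrow> 'v \<times> 'v) \<Rightarrow> ('v, 'e) gpoint topology" where
  "XG V E ends = topology (\<lambda>U. U \<subseteq> XG_pts V E \<and>
      (\<forall>e\<in>E. openin (top_of_set {0..1::real}) {t \<in> {0..1}. edge_pt ends e t \<in> U}))"

definition ray_pts :: "(nat \<Rightarrow> 'v) \<times> (nat \<Rightarrow> 'e) \<Rightarrow> ('v, 'e) gpoint set" where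
  "ray_pts R = range (\<lambda>i. Vert (fst R i)) \<union> {Inner (snd R i) t | i t. 0 < t \<and> t < 1}"

definition end_pts :: "'v set \<Rightarrow> 'e set \<Rightarrow> ('e \<Rightarrow> 'v \<times> 'v) \<Rightarrow> ('v, 'e) gpoint set" where
  "end_pts V E ends = {End (edge_end V E ends R) | R. is_ray V E ends R}"

definition tilde :: "'v set \<Rightarrow> 'e set \<Rightarrow> ('e \<Rightarrow> 'v \<times> 'v) \<Rightarrow> ('v, 'e) gpoint set \<Rightarrow> ('v, 'e) gpoint set" where
  "tilde V E ends C = C \<union> {End (edge_end V E ends R) | R. is_ray V E ends R \<and> ray_pts R \<subseteq> C}"

definition basic_open_sets :: "'v set \<Rightarrow> 'e set \<Rightarrow> ('e \<Rightarrow> 'v \<times> 'v) \<Rightarrow> ('v, 'e) gpoint set set" where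
  "basic_open_sets V E ends = {tilde V E ends C | C Z. finite Z \<and> Z \<subseteq> inner_pts E \<and>
      C \<in> connected_components_of (subtopology (XG V E ends) (XG_pts V E - Z))}"

definition Gspace :: "'v set \<Rightarrow> 'e set \<Rightarrow> ('e \<Rightarrow> 'v \<times> 'v) \<Rightarrow> ('v, 'e) gpoint topology" where
  "Gspace V E ends = topology (arbitrary union_of (\<lambda>U. U \<in> basic_open_sets V E ends))"

end

theory Submission imports Defs begin

locale gr =
  fixes V :: "'v set" and E :: "'e set" and ends :: "'e \<Rightarrow> 'v \<times> 'v"
  assumes graph: "is_graph V E ends"
begin

abbreviation "XT \<equiv> XG V E ends"
abbreviation "TZ Z \<equiv> subtopology XT (XG_pts V E - Z)"

lemma XG_istop: "istopology (\<lambda>U. U \<subseteq> XG_pts V E \<and>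
      (\<forall>e\<in>E. openin (top_of_set {0..1::real}) {t \<in> {0..1}. edge_pt ends e t \<in> U}))"
  unfolding istopology_def
proof (rule conjI; intro allI impI)
  fix S T :: "('v,'e) gpoint set"
  assume S: "S \<subseteq> XG_pts V E \<and> (\<forall>e\<in>E. openin (top_of_set {0..1::real}) {t \<in> {0..1}. edge_pt ends e t \<in> S})"
    and T: "T \<subseteq> XG_pts V E \<and> (\<forall>e\<in>E. openin (top_of_set {0..1::real}) {t \<in> {0..1}. edge_pt ends e t \<in> T})"
  show "S \<inter> T \<subseteq> XG_pts V E \<and> (\<forall>e\<in>E. openin (top_of_set {0..1::real}) {t \<in> {0..1}. edge_pt ends e t \<in> S \<inter> T})"
  proof (intro conjI ballI)
    show "S \<inter> T \<subseteq> XG_pts V E" using S by auto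
    fix e assume "e \<in> E"
    have "{t \<in> {0..1}. edge_pt ends e t \<in> S \<inter> T} = {t \<in> {0..1}. edge_pt ends e t \<in> S} \<inter> {t \<in> {0..1}. edge_pt ends e t \<in> T}" by auto
    then show "openin (top_of_set {0..1::real}) {t \<in> {0..1}. edge_pt ends e t \<in> S \<inter> T}"
      using S T \<open>e \<in> E\<close> by (simp add: openin_Int)
  qed
next
  fix K :: "('v,'e) gpoint set set"
  assume K: "\<forall>S\<in>K. S \<subseteq> XG_pts V E \<and> (\<forall>e\<in>E. openin (top_of_set {0..1::real}) {t \<in> {0..1}. edge_pt ends e t \<in> S})"
  show "\<Union>K \<subseteq> XG_pts V E \<and> (\<forall>e\<in>E. openin (top_of_set {0..1::real}) {t \<in> {0..1}. edge_pt ends e t \<in> \<Union>K})"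
  proof (intro conjI ballI)
    show "\<Union>K \<subseteq> XG_pts V E" using K by auto
    fix e assume "e \<in> E"
    have "{t \<in> {0..1}. edge_pt ends e t \<in> \<Union>K} = \<Union>((\<lambda>S. {t \<in> {0..1}. edge_pt ends e t \<in> S}) ` K)" by auto
    then show "openin (top_of_set {0..1::real}) {t \<in> {0..1}. edge_pt ends e t \<in> \<Union>K}"
      using K \<open>e \<in> E\<close> by (auto intro!: openin_Union)
  qed
qed

lemma openin_XT: "openin XT U \<longleftrightarrow> U \<subseteq> XG_pts V E \<and>
      (\<forall>e\<in>E. openin (top_of_set {0..1::real}) {t \<in> {0..1}. edge_pt ends e t \<in> U})"
  unfolding XG_def using XG_istop by simp

lemma edge_pt_in: "e \<in> E \<Longrightarrow> t \<in> {0..1} \<Longrightarrow> edge_pt ends e t \<in> XG_pts V E"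
  using graph unfolding is_graph_def edge_pt_def XG_pts_def inner_pts_def by auto

lemma topspace_XT: "topspace XT = XG_pts V E"
proof -
  have "openin XT (XG_pts V E)"
    unfolding openin_XT
  proof (intro conjI ballI)
    fix e assume "e \<in> E"
    then have "{t \<in> {0..1}. edge_pt ends e t \<in> XG_pts V E} = {0..1::real}" using edge_pt_in by auto
    then show "openin (top_of_set {0..1::real}) {t \<in> {0..1}. edge_pt ends e t \<in> XG_pts V E}"
      by (metis openin_topspace topspace_euclidean_subtopology)
  qed simp
  then show ?thesis using openin_subset[of XT] openin_XT
    by (metis openin_topspace subset_antisym)
qed

lemma cont_edge: assumes e: "e \<in> E" shows "continuous_map (top_of_set {0..1::real}) XT (edge_pt ends e)"
  unfolding continuous_map_def
proof (intro conjI allI impI Pi_I)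
  fix x assume "x \<in> topspace (top_of_set {0..1::real})"
  then show "edge_pt ends e x \<in> topspace XT" using e edge_pt_in topspace_XT by auto
next
  fix U assume "openin XT U"
  then have "openin (top_of_set {0..1::real}) {x \<in> {0..1}. edge_pt ends e x \<in> U}"
    unfolding openin_XT using e by auto
  then show "openin (top_of_set {0..1::real}) {x \<in> topspace (top_of_set {0..1}). edge_pt ends e x \<in> U}"
    by simp
qed

lemma conn01: "connectedin (top_of_set {0..1::real}) {0..1}"
proof -
  have "connectedin euclidean {0..1::real}" by simp
  then show ?thesis by (simp add: connectedin_subtopology)
qed

lemma conn_edge: "e \<in> E \<Longrightarrow> connectedin XT (edge_pt ends e ` {0..1})"
  by (rule connectedin_continuous_map_image[OF cont_edge conn01])

abbreviation "adj F \<equiv> adj_minus V E ends F"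
definition fz :: "('v,'e) gpoint set \<Rightarrow> 'e set" where "fz Z = {e. \<exists>t. Inner e t \<in> Z}"

lemma adj_sym: "(x,y) \<in> adj F \<Longrightarrow> (y,x) \<in> adj F"
  unfolding adj_minus_def by auto

lemma rch_sym: "(u,w) \<in> (adj F)\<^sup>* \<Longrightarrow> (w,u) \<in> (adj F)\<^sup>*"
proof (induction rule: rtrancl_induct)
  case base then show ?case by simp
next
  case (step y z) then show ?case
    by (meson adj_sym converse_rtrancl_into_rtrancl)
qed

lemma adj_mono: "F \<subseteq> F' \<Longrightarrow> adj F' \<subseteq> adj F"
  unfolding adj_minus_def by auto

lemma rch_mono: "F \<subseteq> F' \<Longrightarrow> (u,w) \<in> (adj F')\<^sup>* \<Longrightarrow> (u,w) \<in> (adj F)\<^sup>*"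
  by (meson adj_mono rtrancl_mono subsetD)

lemma adj_V: "(x,y) \<in> adj F \<Longrightarrow> x \<in> V \<and> y \<in> V"
proof -
  assume "(x,y) \<in> adj F"
  then obtain e where "e \<in> E" and "ends e = (x,y) \<or> ends e = (y,x)" unfolding adj_minus_def by auto
  moreover have "fst (ends e) \<in> V" "snd (ends e) \<in> V" using graph \<open>e \<in> E\<close> unfolding is_graph_def by auto
  ultimately show ?thesis by auto
qed

lemma rch_V: "(u,w) \<in> (adj F)\<^sup>* \<Longrightarrow> u \<in> V \<Longrightarrow> w \<in> V"
proof (induction rule: rtrancl_induct)
  case (step y z) then show ?case using adj_V by metis
qed simp

lemma topspace_TZ: "topspace (TZ Z) = XG_pts V E - Z"
  using topspace_XT by auto

lemma seg:
  assumes e: "e \<in> E" and nI: "\<forall>t. Inner e t \<notin> Z" and noV: "\<forall>x. Vert x \<notin> Z" and t: "t \<in> {0..1}"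
  shows "connected_component_of (TZ Z) (Vert (fst (ends e))) (edge_pt ends e t)"
proof -
  let ?S = "edge_pt ends e ` {0..1}"
  have "?S \<subseteq> XG_pts V E" using edge_pt_in e by auto
  moreover have "?S \<inter> Z = {}" using nI noV unfolding edge_pt_def by auto
  ultimately have "connectedin (TZ Z) ?S" using conn_edge[OF e] by (auto simp: connectedin_subtopology)
  moreover have "Vert (fst (ends e)) \<in> ?S"
    by (rule image_eqI[of _ _ 0]) (auto simp: edge_pt_def)
  moreover have "edge_pt ends e t \<in> ?S" using t by auto
  ultimately show ?thesis unfolding connected_component_of_def by blast
qed

lemma seg2:
  assumes e: "e \<in> E" and nI: "\<forall>t. Inner e t \<notin> Z" and noV: "\<forall>x. Vert x \<notin> Z"
  shows "connected_component_of (TZ Z) (Vert (fst (ends e))) (Vert (snd (ends e)))"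
  using seg[OF e nI noV, of 1] by (simp add: edge_pt_def)

lemma path_cc:
  assumes noV: "\<forall>x. Vert x \<notin> Z" and hF: "\<forall>e t. Inner e t \<in> Z \<longrightarrow> e \<in> F"
    and u: "u \<in> V" and r: "(u,w) \<in> (adj F)\<^sup>*"
  shows "connected_component_of (TZ Z) (Vert u) (Vert w)"
  using r
proof (induction rule: rtrancl_induct)
  case base
  then show ?case using u noV by (simp add: connected_component_of_refl topspace_XT XG_pts_def)
next
  case (step y z)
  then obtain e where e: "e \<in> E" "e \<notin> F" and en: "ends e = (y,z) \<or> ends e = (z,y)"
    unfolding adj_minus_def by auto
  have nI: "\<forall>t. Inner e t \<notin> Z" using hF e by auto
  have "connected_component_of (TZ Z) (Vert y) (Vert z)"
    using seg2[OF e(1) nI noV] en by (auto simp: connected_component_of_sym)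
  then show ?case using step.IH connected_component_of_trans by metis
qed

lemma ray_rch:
  assumes R: "is_ray V E ends R" and nF: "\<forall>i\<ge>n. snd R i \<notin> F" and "n \<le> i"
  shows "(fst R n, fst R i) \<in> (adj F)\<^sup>*"
  using \<open>n \<le> i\<close>
proof (induction i rule: dec_induct)
  case base then show ?case by simp
next
  case (step i)
  have e: "snd R i \<in> E" "snd R i \<notin> F" "ends (snd R i) = (fst R i, fst R (Suc i)) \<or> ends (snd R i) = (fst R (Suc i), fst R i)"
    using R nF step.hyps unfolding is_ray_def by auto
  have "(fst R i, fst R (Suc i)) \<in> adj F"
    unfolding adj_minus_def using e by blast
  then show ?case using step.IH by simp
qed

lemma ray_cc:
  assumes noV: "\<forall>x. Vert x \<notin> Z" and hF: "\<forall>e t. Inner e t \<in> Z \<longrightarrow> e \<in> F"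
    and R: "is_ray V E ends R" and nF: "\<forall>i. snd R i \<notin> F"
  shows "ray_pts R \<subseteq> connected_component_of_set (TZ Z) (Vert (fst R 0))"
proof -
  have V0: "fst R 0 \<in> V" using R unfolding is_ray_def by auto
  have vi: "connected_component_of (TZ Z) (Vert (fst R 0)) (Vert (fst R i))" for i
    using path_cc[OF noV hF V0 ray_rch[OF R, of 0 F i]] nF by simp
  have ii: "connected_component_of (TZ Z) (Vert (fst R 0)) (Inner (snd R i) t)" if "0 < t" "t < 1" for i t
  proof -
    let ?e = "snd R i"
    have e: "?e \<in> E" using R unfolding is_ray_def by auto
    have nI: "\<forall>t. Inner ?e t \<notin> Z" using hF nF by auto
    have c1: "connected_component_of (TZ Z) (Vert (fst (ends ?e))) (Inner ?e t)"
      using seg[OF e nI noV, of t] that by (simp add: edge_pt_def)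
    have "ends ?e = (fst R i, fst R (Suc i)) \<or> ends ?e = (fst R (Suc i), fst R i)"
      using R unfolding is_ray_def by blast
    then have "fst (ends ?e) = fst R i \<or> fst (ends ?e) = fst R (Suc i)" by auto
    then show ?thesis
    proof
      assume "fst (ends ?e) = fst R i"
      then show ?thesis using vi[of i] c1 connected_component_of_trans by fastforce
    next
      assume "fst (ends ?e) = fst R (Suc i)"
      then show ?thesis using vi[of "Suc i"] c1 connected_component_of_trans by fastforce
    qed
  qed
  show ?thesis
  proof
    fix p assume "p \<in> ray_pts R"
    then have "(\<exists>i. p = Vert (fst R i)) \<or> (\<exists>i t. p = Inner (snd R i) t \<and> 0 < t \<and> t < 1)"
      unfolding ray_pts_def by blast
    then show "p \<in> connected_component_of_set (TZ Z) (Vert (fst R 0))"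
      using vi ii by blast
  qed
qed


lemma ray_inj_edges: assumes R: "is_ray V E ends R" shows "inj (snd R)"
proof (rule injI)
  fix i j assume eq: "snd R i = snd R j"
  have ij: "inj (fst R)" using R unfolding is_ray_def by auto
  have a: "ends (snd R i) = (fst R i, fst R (Suc i)) \<or> ends (snd R i) = (fst R (Suc i), fst R i)"
   and b: "ends (snd R j) = (fst R j, fst R (Suc j)) \<or> ends (snd R j) = (fst R (Suc j), fst R j)"
    using R unfolding is_ray_def by blast+
  have "(fst R i = fst R j \<and> fst R (Suc i) = fst R (Suc j)) \<or> (fst R i = fst R (Suc j) \<and> fst R (Suc i) = fst R j)"
    using a b eq by auto
  then have "(i = j) \<or> (i = Suc j \<and> Suc i = j)" using ij by (auto dest: injD)
  then show "i = j" by auto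
qed

lemma comp_rch: assumes "K \<in> components_minus V E ends F" "a \<in> K" "b \<in> K"
  shows "(a,b) \<in> (adj F)\<^sup>*"
proof -
  obtain v where "K = {w. (v, w) \<in> (adj F)\<^sup>*}" using assms(1) unfolding components_minus_def by auto
  then have "(v,a) \<in> (adj F)\<^sup>*" "(v,b) \<in> (adj F)\<^sup>*" using assms by auto
  then show ?thesis using rch_sym rtrancl_trans by metis
qed

lemma edge_equiv_refl: assumes R: "is_ray V E ends R" shows "edge_equiv V E ends R R"
  unfolding edge_equiv_def
proof (intro allI impI)
  fix F :: "'e set" assume F: "finite F"
  have "finite (snd R -` F)" using finite_vimageI[OF F ray_inj_edges[OF R]] .
  then obtain N where N: "\<forall>i\<in>snd R -` F. i < N" using finite_nat_set_iff_bounded by blast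
  have nF: "\<forall>i\<ge>N. snd R i \<notin> F"
  proof (intro allI impI notI)
    fix i assume "N \<le> i" "snd R i \<in> F"
    then show False using N by (meson leD vimageI2)
  qed
  let ?K = "{w. (fst R N, w) \<in> (adj F)\<^sup>*}"
  have "fst R N \<in> V" using R unfolding is_ray_def by auto
  then have K: "?K \<in> components_minus V E ends F" unfolding components_minus_def by auto
  have "\<forall>i\<ge>N. fst R i \<in> ?K \<and> snd R i \<notin> F" using ray_rch[OF R nF] nF by auto
  then show "\<exists>K\<in>components_minus V E ends F. \<exists>n m. (\<forall>i\<ge>n. fst R i \<in> K \<and> snd R i \<notin> F) \<and> (\<forall>i\<ge>m. fst R i \<in> K \<and> snd R i \<notin> F)"
    using K by blast
qed

lemma ray_in_end: "is_ray V E ends R \<Longrightarrow> R \<in> edge_end V E ends R"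
  unfolding edge_end_def using edge_equiv_refl by auto

lemma end_eq_equiv: "is_ray V E ends R2 \<Longrightarrow> edge_end V E ends R1 = edge_end V E ends R2 \<Longrightarrow> edge_equiv V E ends R1 R2"
  using ray_in_end unfolding edge_end_def by blast

definition shift :: "(nat \<Rightarrow> 'v) \<times> (nat \<Rightarrow> 'e) \<Rightarrow> nat \<Rightarrow> (nat \<Rightarrow> 'v) \<times> (nat \<Rightarrow> 'e)" where
  "shift R n = (\<lambda>i. fst R (i+n), \<lambda>i. snd R (i+n))"

lemma shift_ray: assumes R: "is_ray V E ends R" shows "is_ray V E ends (shift R n)"
proof -
  have "inj (\<lambda>i. fst R (i+n))" using R unfolding is_ray_def inj_def by (metis add_right_cancel)
  then show ?thesis using R unfolding is_ray_def shift_def by auto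
qed

lemma tail_ex: "(\<exists>n'. \<forall>i\<ge>n'. P (i+n)) \<longleftrightarrow> (\<exists>n'::nat. \<forall>i\<ge>n'. P i)"
proof
  assume "\<exists>n'. \<forall>i\<ge>n'. P (i+n)"
  then obtain n' where h: "\<forall>i\<ge>n'. P (i+n)" by blast
  have "\<forall>i\<ge>n'+n. P i"
  proof (intro allI impI)
    fix i assume "n'+n \<le> i"
    then have "P ((i-n)+n)" using h by (metis add_le_imp_le_diff)
    then show "P i" using \<open>n'+n \<le> i\<close> by simp
  qed
  then show "\<exists>n'::nat. \<forall>i\<ge>n'. P i" by blast
next
  assume "\<exists>n'::nat. \<forall>i\<ge>n'. P i"
  then obtain n' where h: "\<forall>i\<ge>n'. P i" by blast
  then have "\<forall>i\<ge>n'. P (i+n)" by auto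
  then show "\<exists>n'. \<forall>i\<ge>n'. P (i+n)" by blast
qed

lemma shift_equiv: "edge_equiv V E ends (shift R n) R' \<longleftrightarrow> edge_equiv V E ends R R'"
proof -
  have "\<And>K F. (\<exists>n'. \<forall>i\<ge>n'. fst (shift R n) i \<in> K \<and> snd (shift R n) i \<notin> F) \<longleftrightarrow> (\<exists>n'. \<forall>i\<ge>n'. fst R i \<in> K \<and> snd R i \<notin> F)"
    unfolding shift_def using tail_ex[of "\<lambda>i. fst R i \<in> _ \<and> snd R i \<notin> _"] by simp
  then show ?thesis unfolding edge_equiv_def by simp
qed

lemma shift_end: "edge_end V E ends (shift R n) = edge_end V E ends R"
  unfolding edge_end_def using shift_equiv by simp

lemma shift_pts: "ray_pts (shift R n) \<subseteq> ray_pts R"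
  unfolding ray_pts_def shift_def by auto


abbreviation "basic \<equiv> basic_open_sets V E ends"

definition gedge :: "('v,'e) gpoint \<Rightarrow> 'e" where
  "gedge p = (case p of Inner e t \<Rightarrow> e | _ \<Rightarrow> undefined)"

lemma fz_finite: "finite Z \<Longrightarrow> finite (fz Z)"
proof -
  assume "finite Z"
  have "fz Z \<subseteq> gedge ` Z"
  proof
    fix e assume "e \<in> fz Z"
    then obtain t where "Inner e t \<in> Z" unfolding fz_def by auto
    moreover have "gedge (Inner e t) = e" unfolding gedge_def by simp
    ultimately show "e \<in> gedge ` Z" by force
  qed
  then show ?thesis using \<open>finite Z\<close> finite_subset by blast
qed

lemma fz_E: "Z \<subseteq> inner_pts E \<Longrightarrow> fz Z \<subseteq> E"
  unfolding fz_def inner_pts_def by auto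

lemma Z_noV: "Z \<subseteq> inner_pts E \<Longrightarrow> \<forall>x. Vert x \<notin> Z"
  unfolding inner_pts_def by auto

lemma Z_hF: "\<forall>e t. Inner e t \<in> Z \<longrightarrow> e \<in> fz Z"
  unfolding fz_def by auto

lemma comp_sub: "C \<in> connected_components_of (TZ Z) \<Longrightarrow> C \<subseteq> XG_pts V E - Z"
proof -
  assume "C \<in> connected_components_of (TZ Z)"
  then obtain c where "C = connected_component_of_set (TZ Z) c" unfolding connected_components_of_def by auto
  then show ?thesis using connected_component_of_subset_topspace[of "TZ Z" c] topspace_TZ by simp
qed

lemma comp_max:
  assumes "Z1 \<subseteq> Z" "C \<in> connected_components_of (TZ Z1)" "x \<in> connected_component_of_set (TZ Z) y" "x \<in> C"
  shows "connected_component_of_set (TZ Z) y \<subseteq> C"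
proof -
  let ?D = "connected_component_of_set (TZ Z) y"
  have "connectedin (TZ Z) ?D" by (rule connectedin_connected_component_of)
  then have "connectedin XT ?D" "?D \<subseteq> XG_pts V E - Z" by (auto simp: connectedin_subtopology)
  then have "connectedin (TZ Z1) ?D" using assms(1) by (auto simp: connectedin_subtopology)
  then have D: "?D \<subseteq> connected_component_of_set (TZ Z1) x"
    using connected_component_of_maximal assms(3) by metis
  obtain c where c: "C = connected_component_of_set (TZ Z1) c"
    using assms(2) unfolding connected_components_of_def by auto
  then have "connected_component_of (TZ Z1) c x" using assms(4) by auto
  then have "connected_component_of_set (TZ Z1) x = C" using c
    by (metis connected_component_of_equiv)
  then show ?thesis using D by simp
qed

lemma tilde_mono: "C \<subseteq> D \<Longrightarrow> tilde V E ends C \<subseteq> tilde V E ends D"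
  unfolding tilde_def by auto

lemma XG_noEnd: "End x \<notin> XG_pts V E"
  unfolding XG_pts_def inner_pts_def by auto

lemma tilde_cases:
  assumes "p \<in> tilde V E ends C" "C \<subseteq> XG_pts V E"
  obtains "p \<in> C" | R where "is_ray V E ends R" "ray_pts R \<subseteq> C" "p = End (edge_end V E ends R)"
  using assms unfolding tilde_def by auto

lemma comp_in: "q \<in> XG_pts V E - Z \<Longrightarrow> connected_component_of_set (TZ Z) q \<in> connected_components_of (TZ Z)"
  unfolding connected_components_of_def using topspace_TZ by auto

lemma comp_self: "q \<in> XG_pts V E - Z \<Longrightarrow> q \<in> connected_component_of_set (TZ Z) q"
  by (simp add: connected_component_of_refl topspace_XT)

lemma basicI: "finite Z \<Longrightarrow> Z \<subseteq> inner_pts E \<Longrightarrow> C \<in> connected_components_of (TZ Z) \<Longrightarrow> tilde V E ends C \<in> basic"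
  unfolding basic_open_sets_def by blast

lemma basic_Int:
  assumes B1: "B1 \<in> basic" and B2: "B2 \<in> basic" and p: "p \<in> B1 \<inter> B2"
  shows "\<exists>B\<in>basic. p \<in> B \<and> B \<subseteq> B1 \<inter> B2"
proof -
  obtain C1 Z1 where Z1: "B1 = tilde V E ends C1" "finite Z1" "Z1 \<subseteq> inner_pts E" "C1 \<in> connected_components_of (TZ Z1)"
    using B1 unfolding basic_open_sets_def by auto
  obtain C2 Z2 where Z2: "B2 = tilde V E ends C2" "finite Z2" "Z2 \<subseteq> inner_pts E" "C2 \<in> connected_components_of (TZ Z2)"
    using B2 unfolding basic_open_sets_def by auto
  let ?Z = "Z1 \<union> Z2"
  have Zf: "finite ?Z" "?Z \<subseteq> inner_pts E" using Z1 Z2 by auto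
  have C1s: "C1 \<subseteq> XG_pts V E - Z1" and C2s: "C2 \<subseteq> XG_pts V E - Z2" using comp_sub Z1 Z2 by auto
  show ?thesis
  proof (cases "p \<in> C1 \<and> p \<in> C2")
    case True
    let ?D = "connected_component_of_set (TZ ?Z) p"
    have pt: "p \<in> XG_pts V E - ?Z" using True C1s C2s by auto
    have d1: "?D \<subseteq> C1" using comp_max[of Z1 ?Z C1 p p] comp_self[OF pt] True Z1 by auto
    have d2: "?D \<subseteq> C2" using comp_max[of Z2 ?Z C2 p p] comp_self[OF pt] True Z2 by auto
    have bas: "tilde V E ends ?D \<in> basic" using basicI[OF Zf comp_in[OF pt]] .
    have pin: "p \<in> tilde V E ends ?D" using comp_self[OF pt] unfolding tilde_def by auto
    have sub: "tilde V E ends ?D \<subseteq> B1 \<inter> B2" using Z1(1) Z2(1) tilde_mono[OF d1] tilde_mono[OF d2] by simp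
    show ?thesis using pin sub bas by (intro bexI[of _ "tilde V E ends ?D"]) simp_all
  next
    case False
    then have "p \<notin> C1 \<or> p \<notin> C2" by blast
    have "\<exists>R1. is_ray V E ends R1 \<and> ray_pts R1 \<subseteq> C1 \<and> p = End (edge_end V E ends R1)"
    proof -
      have "p \<in> tilde V E ends C1" using p Z1 by auto
      then show ?thesis
      proof (rule tilde_cases)
        show "C1 \<subseteq> XG_pts V E" using C1s by auto
        assume "p \<in> C1"
        then have "p \<in> XG_pts V E" using C1s by auto
        moreover have "p \<in> tilde V E ends C2" using p Z2 by auto
        ultimately have "p \<in> C2" using C2s by (auto elim: tilde_cases simp: XG_noEnd)
        then show ?thesis using False \<open>p \<in> C1\<close> by auto
      qed blast
    qed
    then obtain R1 where R1: "is_ray V E ends R1" "ray_pts R1 \<subseteq> C1" "p = End (edge_end V E ends R1)" by blast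
    have "p \<notin> XG_pts V E" using R1(3) XG_noEnd by auto
    then have "p \<notin> C2" using C2s by auto
    moreover have "p \<in> tilde V E ends C2" using p Z2 by auto
    ultimately obtain R2 where R2: "is_ray V E ends R2" "ray_pts R2 \<subseteq> C2" "p = End (edge_end V E ends R2)"
      unfolding tilde_def by auto
    have eq: "edge_equiv V E ends R1 R2" using end_eq_equiv[OF R2(1)] R1(3) R2(3) by simp
    let ?F = "fz ?Z"
    have "finite ?F" using fz_finite Zf by auto
    then obtain K n m where K: "K \<in> components_minus V E ends ?F"
      and n: "\<forall>i\<ge>n. fst R1 i \<in> K \<and> snd R1 i \<notin> ?F" and m: "\<forall>i\<ge>m. fst R2 i \<in> K \<and> snd R2 i \<notin> ?F"
      using eq[unfolded edge_equiv_def, rule_format, OF \<open>finite ?F\<close>] by metis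
    let ?R = "shift R1 n"
    have Rr: "is_ray V E ends ?R" using shift_ray[OF R1(1)] .
    have noV: "\<forall>x. Vert x \<notin> ?Z" using Z_noV[OF Zf(2)] .
    have nF: "\<forall>i. snd ?R i \<notin> ?F"
    proof
      fix i have "n \<le> i + n" by simp
      then show "snd ?R i \<notin> ?F" using n unfolding shift_def by simp
    qed
    let ?q = "Vert (fst R1 n)"
    have Vn: "fst R1 n \<in> V" using R1(1) unfolding is_ray_def by auto
    have qt: "?q \<in> XG_pts V E - ?Z" using Vn noV unfolding XG_pts_def by auto
    let ?D = "connected_component_of_set (TZ ?Z) ?q"
    have "fst ?R 0 = fst R1 n" unfolding shift_def by simp
    then have rD: "ray_pts ?R \<subseteq> ?D" using ray_cc[OF noV Z_hF Rr nF] by simp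
    have "?q \<in> ray_pts R1" unfolding ray_pts_def by auto
    then have d1: "?D \<subseteq> C1" using comp_max[of Z1 ?Z C1 ?q ?q] comp_self[OF qt] Z1 R1(2) by auto
    have d2: "?D \<subseteq> C2"
    proof -
      have "(fst R1 n, fst R2 m) \<in> (adj ?F)\<^sup>*" using comp_rch[OF K] n m by auto
      then have c: "Vert (fst R2 m) \<in> ?D" using path_cc[OF noV Z_hF Vn] by simp
      have "Vert (fst R2 m) \<in> C2" using R2(2) unfolding ray_pts_def by auto
      then show ?thesis using comp_max[of Z2 ?Z C2 "Vert (fst R2 m)" ?q] c Z2 by auto
    qed
    have bas: "tilde V E ends ?D \<in> basic" using basicI[OF Zf comp_in[OF qt]] .
    have pin: "p \<in> tilde V E ends ?D"
    proof -
      have "p = End (edge_end V E ends ?R)" using R1(3) shift_end[of R1 n] by simp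
      then show ?thesis using Rr rD unfolding tilde_def by blast
    qed
    have sub: "tilde V E ends ?D \<subseteq> B1 \<inter> B2" using Z1(1) Z2(1) tilde_mono[OF d1] tilde_mono[OF d2] by simp
    show ?thesis using pin sub bas by (intro bexI[of _ "tilde V E ends ?D"]) simp_all
  qed
qed

lemma G_istop: "istopology (arbitrary union_of (\<lambda>U. U \<in> basic))"
proof (rule istopology_base_eq[THEN iffD2], intro allI impI)
  fix S T assume ST: "S \<in> basic \<and> T \<in> basic"
  let ?U = "{B \<in> basic. B \<subseteq> S \<inter> T}"
  have "\<Union>?U = S \<inter> T"
  proof
    show "\<Union>?U \<subseteq> S \<inter> T" by auto
    show "S \<inter> T \<subseteq> \<Union>?U"
    proof
      fix p assume "p \<in> S \<inter> T"
      then obtain B where "B \<in> basic" "p \<in> B" "B \<subseteq> S \<inter> T" using basic_Int[of S T p] ST by auto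
      then show "p \<in> \<Union>?U" by auto
    qed
  qed
  moreover have "?U \<subseteq> Collect (\<lambda>U. U \<in> basic)" by auto
  ultimately show "(arbitrary union_of (\<lambda>U. U \<in> basic)) (S \<inter> T)"
    unfolding union_of_def arbitrary_def by (intro exI[of _ ?U]) simp
qed

lemma openin_G: "openin (Gspace V E ends) U \<longleftrightarrow> (arbitrary union_of (\<lambda>U. U \<in> basic)) U"
  unfolding Gspace_def using G_istop by simp

lemma basic_open: "B \<in> basic \<Longrightarrow> openin (Gspace V E ends) B"
proof -
  assume "B \<in> basic"
  then have "{B} \<subseteq> Collect (\<lambda>U. U \<in> basic)" "\<Union>{B} = B" by auto
  then show ?thesis unfolding openin_G union_of_def arbitrary_def by (intro exI[of _ "{B}"]) simp
qed

lemma open_basic_pt: "openin (Gspace V E ends) U \<Longrightarrow> p \<in> U \<Longrightarrow> \<exists>B\<in>basic. p \<in> B \<and> B \<subseteq> U"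
proof -
  assume "openin (Gspace V E ends) U" "p \<in> U"
  then obtain W where "W \<subseteq> Collect (\<lambda>U. U \<in> basic)" "\<Union>W = U" unfolding openin_G union_of_def by auto
  then show ?thesis using \<open>p \<in> U\<close> by auto
qed

lemma basic_topspace: "B \<in> basic \<Longrightarrow> p \<in> B \<Longrightarrow> p \<in> topspace (Gspace V E ends)"
  using basic_open openin_subset by blast


definition comp :: "'e set \<Rightarrow> 'v \<Rightarrow> 'v set" where "comp F v = {w. (v,w) \<in> (adj F)\<^sup>*}"

lemma comp_self': "v \<in> comp F v" unfolding comp_def by simp

lemma comp_eq: "x \<in> comp F v \<Longrightarrow> comp F x = comp F v"
  unfolding comp_def by (auto intro: rtrancl_trans dest: rch_sym)

lemma comp_V: "v \<in> V \<Longrightarrow> comp F v \<subseteq> V"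
  unfolding comp_def using rch_V by auto

lemma exit_step: "(a,b) \<in> R\<^sup>* \<Longrightarrow> a \<in> A \<Longrightarrow> b \<notin> A \<Longrightarrow> \<exists>x y. (x,y) \<in> R \<and> x \<in> A \<and> y \<notin> A"
proof (induction rule: rtrancl_induct)
  case base then show ?case by simp
next
  case (step y z) then show ?case by (cases "y \<in> A") auto
qed

end

locale mainl = gr V E ends for V :: "'v set" and E :: "'e set" and ends :: "'e \<Rightarrow> 'v \<times> 'v" +
  fixes S :: "'e set"
  assumes conn: "graph_connected V E ends" and cE: "countable E" and SE: "S \<subseteq> E" and Sinf: "infinite S"
begin

lemma comp_fin: assumes F: "finite F" shows "finite {comp F v | v. v \<in> V}"
proof -
  let ?P = "fst ` ends ` F \<union> snd ` ends ` F"
  have "{comp F v | v. v \<in> V} \<subseteq> insert V (comp F ` ?P)"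
  proof
    fix K assume "K \<in> {comp F v | v. v \<in> V}"
    then obtain v where v: "v \<in> V" "K = comp F v" by auto
    show "K \<in> insert V (comp F ` ?P)"
    proof (cases "V \<subseteq> comp F v")
      case True
      then have "K = V" using comp_V[OF v(1)] v(2) by auto
      then show ?thesis by simp
    next
      case False
      then obtain w where w: "w \<in> V" "w \<notin> comp F v" by auto
      have "(v,w) \<in> (adj {})\<^sup>*" using conn v w unfolding graph_connected_def by auto
      then obtain x y where xy: "(x,y) \<in> adj {}" "x \<in> comp F v" "y \<notin> comp F v"
        using exit_step[of v w "adj {}" "comp F v"] w comp_self' by blast
      then obtain e where e: "e \<in> E" "ends e = (x,y) \<or> ends e = (y,x)" unfolding adj_minus_def by auto
      have "e \<in> F"
      proof (rule ccontr)
        assume "e \<notin> F"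
        then have "(x,y) \<in> adj F" using e unfolding adj_minus_def by auto
        then have "y \<in> comp F v" using xy(2) unfolding comp_def by (auto intro: rtrancl_into_rtrancl)
        then show False using xy by simp
      qed
      then have "x \<in> ?P" using e by force
      moreover have "K = comp F x" using comp_eq[OF xy(2)] v(2) by simp
      ultimately show ?thesis by blast
    qed
  qed
  moreover have "finite (insert V (comp F ` ?P))" using F by simp
  ultimately show ?thesis using finite_subset by blast
qed

definition Inf :: "'e set \<Rightarrow> 'v set \<Rightarrow> bool" where
  "Inf F K \<longleftrightarrow> infinite {e \<in> S - F. fst (ends e) \<in> K}"

lemma S_V: "e \<in> S \<Longrightarrow> fst (ends e) \<in> V \<and> snd (ends e) \<in> V"
  using SE graph unfolding is_graph_def by auto

lemma next_comp:
  assumes F': "finite F'" and FF: "F \<subseteq> F'" and v: "v \<in> V" and I: "Inf F (comp F v)"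
  shows "\<exists>v'. v' \<in> V \<and> comp F' v' \<subseteq> comp F v \<and> Inf F' (comp F' v')"
proof -
  let ?A = "{e \<in> S - F'. fst (ends e) \<in> comp F v}"
  have "?A = {e \<in> S - F. fst (ends e) \<in> comp F v} - F'" using FF by auto
  then have Ai: "infinite ?A" using I F' unfolding Inf_def by (simp add: Diff_infinite_finite)
  let ?g = "\<lambda>e. comp F' (fst (ends e))"
  have "?g ` ?A \<subseteq> {comp F' u | u. u \<in> V}" using S_V by auto
  then have "finite (?g ` ?A)" using comp_fin[OF F'] finite_subset by blast
  then obtain e0 where e0: "e0 \<in> ?A" and inf0: "infinite {a \<in> ?A. ?g a = ?g e0}"
    using pigeonhole_infinite[OF Ai] by blast
  let ?v = "fst (ends e0)"
  have vV: "?v \<in> V" using e0 S_V by auto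
  have sub: "comp F' ?v \<subseteq> comp F v"
  proof
    fix w assume "w \<in> comp F' ?v"
    then have "(?v, w) \<in> (adj F)\<^sup>*" using rch_mono[OF FF] unfolding comp_def by auto
    moreover have "(v, ?v) \<in> (adj F)\<^sup>*" using e0 unfolding comp_def by auto
    ultimately show "w \<in> comp F v" unfolding comp_def by (auto intro: rtrancl_trans)
  qed
  have "{a \<in> ?A. ?g a = ?g e0} \<subseteq> {e \<in> S - F'. fst (ends e) \<in> comp F' ?v}"
  proof
    fix a assume a: "a \<in> {a \<in> ?A. ?g a = ?g e0}"
    then have "fst (ends a) \<in> ?g a" using comp_self' by metis
    then show "a \<in> {e \<in> S - F'. fst (ends e) \<in> comp F' ?v}" using a by auto
  qed
  then have "Inf F' (comp F' ?v)" unfolding Inf_def using inf0 infinite_super by blast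
  then show ?thesis using vV sub by blast
qed

definition Fk :: "nat \<Rightarrow> 'e set" where "Fk k = from_nat_into E ` {..<k}"

lemma Fk_fin: "finite (Fk k)" unfolding Fk_def by simp

lemma Enonempty: "E \<noteq> {}" using Sinf SE by auto

lemma Fk_E: "Fk k \<subseteq> E" unfolding Fk_def using from_nat_into[OF Enonempty] by auto

lemma Fk_mono: "k \<le> l \<Longrightarrow> Fk k \<subseteq> Fk l" unfolding Fk_def by auto

lemma Fk_cover: assumes "finite F" "F \<subseteq> E" shows "\<exists>k. F \<subseteq> Fk k"
proof -
  have "finite (to_nat_on E ` F)" using assms by simp
  then obtain k where k: "\<forall>n\<in>to_nat_on E ` F. n < k" using finite_nat_set_iff_bounded by blast
  have "F \<subseteq> Fk k"
  proof
    fix e assume "e \<in> F"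
    then have "from_nat_into E (to_nat_on E e) = e" "to_nat_on E e < k" using assms(2) cE k by auto
    then show "e \<in> Fk k" unfolding Fk_def by (metis imageI lessThan_iff)
  qed
  then show ?thesis by blast
qed

definition v0 :: 'v where "v0 = fst (ends (SOME e. e \<in> S))"

lemma v0: "v0 \<in> V \<and> Inf (Fk 0) (comp (Fk 0) v0)"
proof -
  have "S \<noteq> {}" using Sinf by auto
  then have "(SOME e. e \<in> S) \<in> S" by (simp add: some_in_eq)
  then have vV: "v0 \<in> V" unfolding v0_def using S_V by auto
  have "Fk 0 = {}" unfolding Fk_def by simp
  moreover have "{e \<in> S - {}. fst (ends e) \<in> comp {} v0} = S"
    using S_V conn vV unfolding graph_connected_def comp_def by auto
  ultimately show ?thesis using vV Sinf unfolding Inf_def by simp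
qed

definition nxt :: "nat \<Rightarrow> 'v \<Rightarrow> 'v" where
  "nxt k v = (SOME v'. v' \<in> V \<and> comp (Fk (Suc k)) v' \<subseteq> comp (Fk k) v \<and> Inf (Fk (Suc k)) (comp (Fk (Suc k)) v'))"

primrec vs :: "nat \<Rightarrow> 'v" where
  "vs 0 = v0"
| "vs (Suc k) = nxt k (vs k)"

lemma vs_inv: "vs k \<in> V \<and> Inf (Fk k) (comp (Fk k) (vs k))"
proof (induction k)
  case 0 then show ?case using v0 by simp
next
  case (Suc k)
  have "\<exists>v'. v' \<in> V \<and> comp (Fk (Suc k)) v' \<subseteq> comp (Fk k) (vs k) \<and> Inf (Fk (Suc k)) (comp (Fk (Suc k)) v')"
    using next_comp[OF Fk_fin Fk_mono] Suc by simp
  then show ?case unfolding vs.simps nxt_def by (rule someI2_ex) auto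
qed

lemma vs_nest: "comp (Fk (Suc k)) (vs (Suc k)) \<subseteq> comp (Fk k) (vs k)"
proof -
  have "\<exists>v'. v' \<in> V \<and> comp (Fk (Suc k)) v' \<subseteq> comp (Fk k) (vs k) \<and> Inf (Fk (Suc k)) (comp (Fk (Suc k)) v')"
    using next_comp[OF Fk_fin Fk_mono] vs_inv by simp
  then show ?thesis unfolding vs.simps nxt_def by (rule someI2_ex) auto
qed

definition Kk :: "nat \<Rightarrow> 'v set" where "Kk k = comp (Fk k) (vs k)"

lemma Kk_anti: "k \<le> l \<Longrightarrow> Kk l \<subseteq> Kk k"
  unfolding Kk_def using vs_nest by (rule lift_Suc_antimono_le)

lemma hit:
  assumes Zf: "finite Z" "Z \<subseteq> inner_pts E" and C: "C \<in> connected_components_of (TZ Z)"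
    and y: "y \<in> V" "Vert y \<in> C" and Fz: "fz Z \<subseteq> Fk k" and yz: "(y,z) \<in> (adj (fz Z))\<^sup>*" and z: "z \<in> Kk k"
  shows "\<exists>e\<in>S. Vert (fst (ends e)) \<in> C \<and> Vert (snd (ends e)) \<in> C"
proof -
  have "infinite {e \<in> S - Fk k. fst (ends e) \<in> Kk k}" using vs_inv unfolding Inf_def Kk_def by simp
  then have "{e \<in> S - Fk k. fst (ends e) \<in> Kk k} \<noteq> {}" by (metis finite.emptyI)
  then obtain e where e: "e \<in> S" "e \<notin> Fk k" "fst (ends e) \<in> Kk k" by auto
  have "(vs k, z) \<in> (adj (Fk k))\<^sup>*" "(vs k, fst (ends e)) \<in> (adj (Fk k))\<^sup>*"
    using z e(3) unfolding Kk_def comp_def by auto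
  then have "(z, fst (ends e)) \<in> (adj (Fk k))\<^sup>*" by (meson rch_sym rtrancl_trans)
  then have zf: "(z, fst (ends e)) \<in> (adj (fz Z))\<^sup>*" using rch_mono[OF Fz] by blast
  have "(fst (ends e), snd (ends e)) \<in> adj (Fk k)" using e SE unfolding adj_minus_def by auto
  then have "(fst (ends e), snd (ends e)) \<in> adj (fz Z)" using adj_mono[OF Fz] by blast
  then have r1: "(y, fst (ends e)) \<in> (adj (fz Z))\<^sup>*" and r2: "(y, snd (ends e)) \<in> (adj (fz Z))\<^sup>*"
    using yz zf by (auto intro: rtrancl_trans rtrancl_into_rtrancl)
  have noV: "\<forall>x. Vert x \<notin> Z" using Z_noV[OF Zf(2)] .
  obtain c where c: "C = connected_component_of_set (TZ Z) c" using C unfolding connected_components_of_def by auto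
  have cy: "connected_component_of (TZ Z) c (Vert y)" using y c by auto
  have "connected_component_of (TZ Z) c (Vert (fst (ends e)))"
    using connected_component_of_trans[OF cy path_cc[OF noV Z_hF y(1) r1]] .
  moreover have "connected_component_of (TZ Z) c (Vert (snd (ends e)))"
    using connected_component_of_trans[OF cy path_cc[OF noV Z_hF y(1) r2]] .
  ultimately show ?thesis using e(1) c by auto
qed


lemma vs_step: "(vs k, vs (Suc k)) \<in> (adj (Fk k))\<^sup>*"
proof -
  have "vs (Suc k) \<in> Kk (Suc k)" unfolding Kk_def by (rule comp_self')
  then have "vs (Suc k) \<in> Kk k" using Kk_anti[of k "Suc k"] by auto
  then show ?thesis unfolding Kk_def comp_def by simp
qed

definition pl :: "nat \<Rightarrow> nat \<times> (nat \<Rightarrow> 'v)" where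
  "pl k = (SOME (n,f). f 0 = vs k \<and> f n = vs (Suc k) \<and> (\<forall>i<n. (f i, f (Suc i)) \<in> adj (Fk k)))"

definition "len k = fst (pl k)"
definition "pth k = snd (pl k)"

lemma pth_props: "pth k 0 = vs k \<and> pth k (len k) = vs (Suc k) \<and> (\<forall>i<len k. (pth k i, pth k (Suc i)) \<in> adj (Fk k))"
proof -
  obtain n where "(vs k, vs (Suc k)) \<in> (adj (Fk k)) ^^ n" using vs_step rtrancl_power by blast
  then obtain f where "f 0 = vs k \<and> f n = vs (Suc k) \<and> (\<forall>i<n. (f i, f (Suc i)) \<in> adj (Fk k))"
    unfolding relpow_fun_conv by blast
  then have ex: "\<exists>p. (case p of (n,f) \<Rightarrow> f 0 = vs k \<and> f n = vs (Suc k) \<and> (\<forall>i<n. (f i, f (Suc i)) \<in> adj (Fk k)))"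
    by auto
  have "case pl k of (n,f) \<Rightarrow> f 0 = vs k \<and> f n = vs (Suc k) \<and> (\<forall>i<n. (f i, f (Suc i)) \<in> adj (Fk k))"
    unfolding pl_def using someI_ex[OF ex] .
  then show ?thesis unfolding len_def pth_def by (simp add: case_prod_beta)
qed

lemma Kk_V: "Kk k \<subseteq> V" unfolding Kk_def using comp_V vs_inv by blast

lemma pth_in: "i \<le> len k \<Longrightarrow> pth k i \<in> Kk k"
proof (induction i)
  case 0 then show ?case using pth_props comp_self' unfolding Kk_def by metis
next
  case (Suc i)
  then have "pth k i \<in> Kk k" "(pth k i, pth k (Suc i)) \<in> adj (Fk k)" using pth_props by auto
  then show ?case unfolding Kk_def comp_def by (auto intro: rtrancl_into_rtrancl)
qed

primrec st :: "nat \<Rightarrow> nat \<times> nat" where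
  "st 0 = (0,0)"
| "st (Suc n) = (if snd (st n) < len (fst (st n)) then (fst (st n), Suc (snd (st n))) else (Suc (fst (st n)), 0))"

definition "W n = pth (fst (st n)) (snd (st n))"

lemma st_inv: "snd (st n) \<le> len (fst (st n))"
  by (induction n) auto

lemma st_mono1: "fst (st n) \<le> fst (st (Suc n))" by auto

lemma st_mono: "n \<le> n' \<Longrightarrow> fst (st n) \<le> fst (st n')"
  using st_mono1 by (rule lift_Suc_mono_le)

lemma st_run: "st n = (k, 0) \<Longrightarrow> j \<le> len k \<Longrightarrow> st (n + j) = (k, j)"
  by (induction j) auto

lemma st_reach: "\<exists>n. st n = (k, 0)"
proof (induction k)
  case 0 then show ?case by (rule exI[of _ 0]) simp
next
  case (Suc k)
  then obtain n where n: "st n = (k,0)" by blast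
  then have "st (n + len k) = (k, len k)" using st_run by simp
  then have "st (Suc (n + len k)) = (Suc k, 0)" by simp
  then show ?case by blast
qed

lemma st_tail: "\<exists>N. \<forall>n\<ge>N. k \<le> fst (st n)"
proof -
  obtain N where "st N = (k,0)" using st_reach by blast
  then show ?thesis using st_mono by (metis fst_conv)
qed

lemma W_in: "W n \<in> Kk (fst (st n))"
  unfolding W_def using pth_in st_inv by blast

lemma W_V: "W n \<in> V" using W_in Kk_V by blast

lemma W_step: "W n = W (Suc n) \<or> (W n, W (Suc n)) \<in> adj (Fk (fst (st n)))"
proof (cases "snd (st n) < len (fst (st n))")
  case True
  then show ?thesis unfolding W_def using pth_props by simp
next
  case False
  then have "snd (st n) = len (fst (st n))" using st_inv le_neq_implies_less by blast
  then show ?thesis unfolding W_def using False pth_props by simp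
qed

context
  assumes caseB: "\<forall>x\<in>V. \<exists>k. x \<notin> Kk k"
begin

lemma fin_occ: "finite {n. W n = x}"
proof (cases "x \<in> V")
  case False
  then have "{n. W n = x} = {}" using W_V by force
  then show ?thesis by simp
next
  case True
  then obtain k0 where k0: "x \<notin> Kk k0" using caseB by blast
  obtain N where N: "\<forall>n\<ge>N. k0 \<le> fst (st n)" using st_tail by blast
  have "{n. W n = x} \<subseteq> {..<N}"
  proof
    fix n assume "n \<in> {n. W n = x}"
    then have "W n = x" by simp
    show "n \<in> {..<N}"
    proof (rule ccontr)
      assume "n \<notin> {..<N}"
      then have "k0 \<le> fst (st n)" using N by auto
      then have "W n \<in> Kk k0" using W_in Kk_anti by blast
      then show False using k0 \<open>W n = x\<close> by simp
    qed
  qed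
  then show ?thesis using finite_subset by blast
qed

definition lst :: "'v \<Rightarrow> nat" where "lst x = Max {n. W n = x}"

lemma lst_prop: "W n = x \<Longrightarrow> n \<le> lst x \<and> W (lst x) = x"
proof -
  assume "W n = x"
  then have "n \<in> {n. W n = x}" by simp
  then have "n \<le> lst x" "lst x \<in> {n. W n = x}" unfolding lst_def using fin_occ Max_ge Max_in by blast+
  then show ?thesis by simp
qed

primrec ii :: "nat \<Rightarrow> nat" where
  "ii 0 = lst (W 0)"
| "ii (Suc m) = lst (W (Suc (ii m)))"

lemma ii_lst: "ii m = lst (W (ii m))"
proof (cases m)
  case 0 then show ?thesis using lst_prop[of 0 "W 0"] by simp
next
  case (Suc m') then show ?thesis using lst_prop[of "Suc (ii m')" "W (Suc (ii m'))"] by simp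
qed

lemma ii_after: "ii m < j \<Longrightarrow> W j \<noteq> W (ii m)"
  using lst_prop[of j "W (ii m)"] ii_lst[of m] by auto

lemma ii_suc: "Suc (ii m) \<le> ii (Suc m) \<and> W (ii (Suc m)) = W (Suc (ii m))"
  using lst_prop[of "Suc (ii m)" "W (Suc (ii m))"] by simp

lemma ii_smono: "strict_mono ii"
  using ii_suc by (intro strict_monoI_Suc) (meson Suc_le_lessD)

definition "rv m = W (ii m)"

lemma rv_step: "(rv m, rv (Suc m)) \<in> adj (Fk (fst (st (ii m))))"
proof -
  have "W (ii m) \<noteq> W (Suc (ii m))" using ii_after[of m "Suc (ii m)"] by simp
  then show ?thesis using W_step[of "ii m"] ii_suc unfolding rv_def by auto
qed

definition "re m = (SOME e. e \<in> E - Fk (fst (st (ii m))) \<and> (ends e = (rv m, rv (Suc m)) \<or> ends e = (rv (Suc m), rv m)))"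

lemma re_prop: "re m \<in> E - Fk (fst (st (ii m))) \<and> (ends (re m) = (rv m, rv (Suc m)) \<or> ends (re m) = (rv (Suc m), rv m))"
proof -
  have "\<exists>e. e \<in> E - Fk (fst (st (ii m))) \<and> (ends e = (rv m, rv (Suc m)) \<or> ends e = (rv (Suc m), rv m))"
    using rv_step[of m] unfolding adj_minus_def by auto
  then show ?thesis unfolding re_def by (rule someI_ex)
qed

lemma ray_built: "is_ray V E ends (rv, re)"
  unfolding is_ray_def
proof (intro conjI allI)
  show "inj (fst (rv, re))"
  proof (rule injI)
    fix a b assume "fst (rv, re) a = fst (rv, re) b"
    then have eq: "W (ii a) = W (ii b)" unfolding rv_def by simp
    show "a = b"
    proof (rule ccontr)
      assume "a \<noteq> b"
      then have "ii a < ii b \<or> ii b < ii a" using ii_smono by (metis linorder_neqE_nat strict_mono_less)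
      then show False using ii_after eq by metis
    qed
  qed
  fix i
  show "fst (rv, re) i \<in> V" unfolding rv_def using W_V by simp
  show "snd (rv, re) i \<in> E" using re_prop by simp
  show "ends (snd (rv, re) i) = (fst (rv, re) i, fst (rv, re) (Suc i)) \<or>
        ends (snd (rv, re) i) = (fst (rv, re) (Suc i), fst (rv, re) i)" using re_prop by simp
qed

lemma ray_tails: "\<exists>N. \<forall>m\<ge>N. rv m \<in> Kk k \<and> re m \<notin> Fk k"
proof -
  obtain N where N: "\<forall>n\<ge>N. k \<le> fst (st n)" using st_tail by blast
  have "\<forall>m\<ge>N. rv m \<in> Kk k \<and> re m \<notin> Fk k"
  proof (intro allI impI)
    fix m assume "N \<le> m"
    moreover have "m \<le> ii m" using ii_smono by (rule strict_mono_imp_increasing)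
    ultimately have k: "k \<le> fst (st (ii m))" using N by auto
    have "rv m \<in> Kk k" unfolding rv_def using W_in Kk_anti[OF k] by blast
    moreover have "re m \<notin> Fk k" using re_prop Fk_mono[OF k] by blast
    ultimately show "rv m \<in> Kk k \<and> re m \<notin> Fk k" by simp
  qed
  then show ?thesis by blast
qed

end


lemma basic_E: assumes "B \<in> basic"
  obtains C Z where "B = tilde V E ends C" "finite Z" "Z \<subseteq> inner_pts E" "C \<in> connected_components_of (TZ Z)"
  using assms unfolding basic_open_sets_def by auto

lemma tilde_sup: "C \<subseteq> tilde V E ends C" unfolding tilde_def by auto

lemma caseA:
  assumes x: "x \<in> V" "\<forall>k. x \<in> Kk k"
  shows "\<exists>p\<in>topspace (Gspace V E ends). \<forall>B\<in>basic. p \<in> B \<longrightarrow> (\<exists>e\<in>S. Vert (fst (ends e)) \<in> B \<and> Vert (snd (ends e)) \<in> B)"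
proof (rule bexI[of _ "Vert x"], intro ballI impI)
  have pt: "Vert x \<in> XG_pts V E - {}" using x unfolding XG_pts_def by auto
  have "tilde V E ends (connected_component_of_set (TZ {}) (Vert x)) \<in> basic"
    using basicI[OF finite.emptyI _ comp_in[OF pt]] by simp
  moreover have "Vert x \<in> tilde V E ends (connected_component_of_set (TZ {}) (Vert x))"
    using comp_self[OF pt] tilde_sup by blast
  ultimately show "Vert x \<in> topspace (Gspace V E ends)" by (rule basic_topspace)
next
  fix B assume B: "B \<in> basic" and p: "Vert x \<in> B"
  obtain C Z where CZ: "B = tilde V E ends C" "finite Z" "Z \<subseteq> inner_pts E" "C \<in> connected_components_of (TZ Z)"
    using B by (rule basic_E)
  have Cs: "C \<subseteq> XG_pts V E" using comp_sub[OF CZ(4)] by auto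
  have xC: "Vert x \<in> C" using p CZ(1) by (auto elim: tilde_cases[OF _ Cs])
  obtain k where k: "fz Z \<subseteq> Fk k" using Fk_cover[OF fz_finite[OF CZ(2)] fz_E[OF CZ(3)]] by blast
  have "\<exists>e\<in>S. Vert (fst (ends e)) \<in> C \<and> Vert (snd (ends e)) \<in> C"
    using hit[OF CZ(2,3,4) x(1) xC k rtrancl_refl] x(2) by blast
  then show "\<exists>e\<in>S. Vert (fst (ends e)) \<in> B \<and> Vert (snd (ends e)) \<in> B"
    using tilde_sup CZ(1) by blast
qed

lemma caseB:
  assumes cB: "\<forall>x\<in>V. \<exists>k. x \<notin> Kk k"
  shows "\<exists>p\<in>topspace (Gspace V E ends). \<forall>B\<in>basic. p \<in> B \<longrightarrow> (\<exists>e\<in>S. Vert (fst (ends e)) \<in> B \<and> Vert (snd (ends e)) \<in> B)"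
proof -
  let ?R = "(rv, re)"
  have R: "is_ray V E ends ?R" using ray_built[OF cB] .
  have tl: "\<exists>N. \<forall>m\<ge>N. fst ?R m \<in> Kk k \<and> snd ?R m \<notin> Fk k" for k using ray_tails[OF cB] by simp
  let ?p = "End (edge_end V E ends ?R)"
  show ?thesis
  proof (rule bexI[of _ ?p], intro ballI impI)
    have V0: "fst ?R 0 \<in> V" using R unfolding is_ray_def by blast
    have pt: "Vert (fst ?R 0) \<in> XG_pts V E - {}" using V0 unfolding XG_pts_def by auto
    let ?C = "connected_component_of_set (TZ {}) (Vert (fst ?R 0))"
    have "tilde V E ends ?C \<in> basic"
      using basicI[OF finite.emptyI _ comp_in[OF pt]] by simp
    moreover have "ray_pts ?R \<subseteq> ?C" using ray_cc[of "{}" "{}" ?R] R by simp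
    then have "?p \<in> tilde V E ends ?C" using R unfolding tilde_def by blast
    ultimately show "?p \<in> topspace (Gspace V E ends)" by (rule basic_topspace)
  next
    fix B assume B: "B \<in> basic" and p: "?p \<in> B"
    obtain C Z where CZ: "B = tilde V E ends C" "finite Z" "Z \<subseteq> inner_pts E" "C \<in> connected_components_of (TZ Z)"
      using B by (rule basic_E)
    have Cs: "C \<subseteq> XG_pts V E" using comp_sub[OF CZ(4)] by auto
    have "?p \<notin> C" using Cs XG_noEnd by blast
    then obtain R' where R': "is_ray V E ends R'" "ray_pts R' \<subseteq> C" "?p = End (edge_end V E ends R')"
      using p CZ(1) by (auto elim: tilde_cases[OF _ Cs])
    have eq: "edge_equiv V E ends R' ?R" using end_eq_equiv[OF R] R'(3) by simp
    let ?F = "fz Z"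
    have Ff: "finite ?F" using fz_finite CZ(2) by auto
    obtain K n m where K: "K \<in> components_minus V E ends ?F"
      and n: "\<forall>i\<ge>n. fst R' i \<in> K \<and> snd R' i \<notin> ?F" and m: "\<forall>i\<ge>m. fst ?R i \<in> K \<and> snd ?R i \<notin> ?F"
      using eq[unfolded edge_equiv_def, rule_format, OF Ff] by metis
    obtain k where k: "?F \<subseteq> Fk k" using Fk_cover[OF Ff fz_E[OF CZ(3)]] by blast
    obtain N where N: "\<forall>j\<ge>N. fst ?R j \<in> Kk k \<and> snd ?R j \<notin> Fk k" using tl by blast
    let ?j = "max m N"
    have zK: "fst ?R ?j \<in> K" and zk: "fst ?R ?j \<in> Kk k" using m N by auto
    have yK: "fst R' n \<in> K" using n by auto
    have yz: "(fst R' n, fst ?R ?j) \<in> (adj ?F)\<^sup>*" using comp_rch[OF K yK zK] .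
    have yV: "fst R' n \<in> V" using R'(1) unfolding is_ray_def by blast
    have yC: "Vert (fst R' n) \<in> C" using R'(2) unfolding ray_pts_def by auto
    have "\<exists>e\<in>S. Vert (fst (ends e)) \<in> C \<and> Vert (snd (ends e)) \<in> C"
      using hit[OF CZ(2,3,4) yV yC k yz zk] .
    then show "\<exists>e\<in>S. Vert (fst (ends e)) \<in> B \<and> Vert (snd (ends e)) \<in> B"
      using tilde_sup CZ(1) by blast
  qed
qed

lemma core: "\<exists>p\<in>topspace (Gspace V E ends). \<forall>B\<in>basic. p \<in> B \<longrightarrow> (\<exists>e\<in>S. Vert (fst (ends e)) \<in> B \<and> Vert (snd (ends e)) \<in> B)"
proof (cases "\<exists>x\<in>V. \<forall>k. x \<in> Kk k")
  case True then show ?thesis using caseA by blast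
next
  case False then show ?thesis using caseB by blast
qed

end

theorem lemma4p2:
  fixes V :: "'v set" and E :: "'e set" and ends :: "'e \<Rightarrow> 'v \<times> 'v"
    and X O1 O2 :: "('v, 'e) gpoint set"
  assumes "is_graph V E ends"
    and "countable V" and "countable E"
    and "graph_connected V E ends"
    and "closedin (Gspace V E ends) X"
    and "openin (subtopology (Gspace V E ends) X) O1"
    and "openin (subtopology (Gspace V E ends) X) O2"
    and "O1 \<inter> O2 = {}"
    and "X = O1 \<union> O2"
  shows "finite {e \<in> E. (Vert (fst (ends e)) \<in> O1 \<and> Vert (snd (ends e)) \<in> O2) \<or>
                         (Vert (fst (ends e)) \<in> O2 \<and> Vert (snd (ends e)) \<in> O1)}"
proof (rule ccontr)
  let ?S = "{e \<in> E. (Vert (fst (ends e)) \<in> O1 \<and> Vert (snd (ends e)) \<in> O2) \<or>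
                         (Vert (fst (ends e)) \<in> O2 \<and> Vert (snd (ends e)) \<in> O1)}"
  let ?G = "Gspace V E ends"
  assume inf: "infinite ?S"
  interpret M: mainl V E ends ?S
    apply unfold_locales
    using assms inf by auto
  obtain p where p: "p \<in> topspace ?G"
    and hp: "\<forall>B\<in>basic_open_sets V E ends. p \<in> B \<longrightarrow> (\<exists>e\<in>?S. Vert (fst (ends e)) \<in> B \<and> Vert (snd (ends e)) \<in> B)"
    using M.core by blast
  have Xt: "X \<subseteq> topspace ?G" and Xo: "openin ?G (topspace ?G - X)"
    using assms(5) unfolding closedin_def by auto
  have eX: "Vert (fst (ends e)) \<in> X \<and> Vert (snd (ends e)) \<in> X" if "e \<in> ?S" for e
    using that assms(9) by auto
  have pX: "p \<in> X"
  proof (rule ccontr)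
    assume "p \<notin> X"
    then have "p \<in> topspace ?G - X" using p by simp
    then obtain B where B: "B \<in> basic_open_sets V E ends" "p \<in> B" "B \<subseteq> topspace ?G - X"
      using M.open_basic_pt[OF Xo] by blast
    then obtain e where e: "e \<in> ?S" "Vert (fst (ends e)) \<in> B" using hp by blast
    then show False using eX[OF e(1)] B(3) by blast
  qed
  have key: False if OO: "openin (subtopology ?G X) P1" "p \<in> P1" "P1 \<inter> P2 = {}" "X = P1 \<union> P2"
    and sw: "\<And>e. e \<in> ?S \<Longrightarrow> (Vert (fst (ends e)) \<in> P2 \<or> Vert (snd (ends e)) \<in> P2)" for P1 P2
  proof -
    obtain T where T: "openin ?G T" "P1 = T \<inter> X" using OO(1) unfolding openin_subtopology by blast
    have "p \<in> T" using T OO(2) by blast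
    then obtain B where B: "B \<in> basic_open_sets V E ends" "p \<in> B" "B \<subseteq> T"
      using M.open_basic_pt[OF T(1)] by blast
    then obtain e where e: "e \<in> ?S" "Vert (fst (ends e)) \<in> B" "Vert (snd (ends e)) \<in> B" using hp by blast
    then have "Vert (fst (ends e)) \<in> P1" "Vert (snd (ends e)) \<in> P1" using eX[OF e(1)] B(3) T(2) by auto
    then show False using sw[OF e(1)] OO(3) by blast
  qed
  show False
  proof (cases "p \<in> O1")
    case True
    show False
      by (rule key[OF assms(6) True assms(8) assms(9)]) auto
  next
    case False
    then have "p \<in> O2" using pX assms(9) by auto
    moreover have "O2 \<inter> O1 = {}" "X = O2 \<union> O1" using assms(8,9) by auto
    ultimately show False
      by (rule key[OF assms(7)]) auto
  qed
qed

end
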